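(* Let $\bowtie$ be a $4\times n$ Latin rectangle with two colors $R,B$. Define the six column types (listed top to bottom) $b_1=(R,R,B,B)^T$, $b_2=(B,B,R,R)^T$, $b_3=(R,B,B,R)^T$, $b_4=(B,R,R,B)^T$, $b_5=(R,B,R,B)^T$, $b_6=(B,R,B,R)^T$, and let $\mu_i$ be the number of columns of $\bowtie$ of type $b_i$. Then $\mu_1=\mu_2$, $\mu_3=\mu_4$, and $\mu_5=\mu_6$.
   Context: A Latin rectangle is an $a\times b$ array of colored nodes such that each color appears the same number of times in every row and each color appears the same number of times in every column. The pairs $(b_1,b_2)$, $(b_3,b_4)$, $(b_5,b_6)$ are color-complementary pairs of columns (each is obtained from the other by swapping $R$ and $B$). *)

theory Defs
  imports Main
begin

datatype color = R | B

text \<open>An a x b array is a function A, with entry A i j for row i < a and column j < b.\<close>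
definition latin_rectangle :: "nat \<Rightarrow> nat \<Rightarrow> (nat \<Rightarrow> nat \<Rightarrow> color) \<Rightarrow> bool" where
  "latin_rectangle a b A \<longleftrightarrow>
     (\<forall>i<a. \<forall>c c'. card {j. j < b \<and> A i j = c} = card {j. j < b \<and> A i j = c'}) \<and>
     (\<forall>j<b. \<forall>c c'. card {i. i < a \<and> A i j = c} = card {i. i < a \<and> A i j = c'})"

definition column4 :: "(nat \<Rightarrow> nat \<Rightarrow> color) \<Rightarrow> nat \<Rightarrow> color list" where
  "column4 A j = map (\<lambda>i. A i j) [0..<4]"

definition mu :: "nat \<Rightarrow> (nat \<Rightarrow> nat \<Rightarrow> color) \<Rightarrow> color list \<Rightarrow> nat" where
  "mu n A v = card {j. j < n \<and> column4 A j = v}"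

definition b1 :: "color list" where "b1 = [R, R, B, B]"
definition b2 :: "color list" where "b2 = [B, B, R, R]"
definition b3 :: "color list" where "b3 = [R, B, B, R]"
definition b4 :: "color list" where "b4 = [B, R, R, B]"
definition b5 :: "color list" where "b5 = [R, B, R, B]"
definition b6 :: "color list" where "b6 = [B, R, B, R]"

end

theory Submission
  imports Defs
begin

lemma card_Suc_filter:
  "card {i::nat. i < Suc k \<and> P i} = card {i. i < k \<and> P i} + (if P k then 1 else 0)"
proof -
  have "{i::nat. i < Suc k \<and> P i} = {i. i < k \<and> P i} \<union> {i. i = k \<and> P i}"
    by (auto simp: less_Suc_eq)
  moreover have "card ({i. i < k \<and> P i} \<union> {i. i = k \<and> P i}) = card {i. i < k \<and> P i} + card {i. i = k \<and> P i}"
    by (rule card_Un_disjoint) auto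
  moreover have "{i. i = k \<and> P i} = (if P k then {k} else {})" by auto
  ultimately show ?thesis by simp
qed

lemma card4: "card {i::nat. i < 4 \<and> P i} =
  (if P 0 then 1 else 0) + (if P 1 then 1 else 0) + (if P 2 then 1 else 0) + (if P 3 then 1 else 0)"
proof -
  have "(4::nat) = Suc (Suc (Suc (Suc 0)))" by simp
  then show ?thesis by (simp only: card_Suc_filter) (simp add: numeral_2_eq_2 numeral_3_eq_3)
qed

lemma col_type:
  assumes "card {i::nat. i < 4 \<and> A i j = R} = card {i. i < 4 \<and> A i j = B}"
  shows "column4 A j \<in> {b1,b2,b3,b4,b5,b6}"
proof -
  have c: "column4 A j = [A 0 j, A 1 j, A 2 j, A 3 j]"
    by (simp add: column4_def numeral_eq_Suc upt_rec)
  show ?thesis using assms unfolding c card4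
    by (cases "A 0 j"; cases "A 1 j"; cases "A 2 j"; cases "A 3 j")
       (simp_all add: b1_def b2_def b3_def b4_def b5_def b6_def)
qed

definition S :: "nat \<Rightarrow> (nat \<Rightarrow> nat \<Rightarrow> color) \<Rightarrow> color list \<Rightarrow> nat set" where
  "S n A v = {j. j < n \<and> column4 A j = v}"

lemma nth_col: "i < 4 \<Longrightarrow> column4 A j ! i = A i j"
  by (simp add: column4_def)

lemma card3:
  assumes "v1 \<noteq> v2" "v1 \<noteq> v3" "v2 \<noteq> v3"
  shows "card (S n A v1 \<union> S n A v2 \<union> S n A v3) = mu n A v1 + mu n A v2 + mu n A v3"
proof -
  have f: "finite (S n A v)" for v by (simp add: S_def)
  have "card (S n A v1 \<union> S n A v2) = mu n A v1 + mu n A v2"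
    by (subst card_Un_disjoint) (use assms f in \<open>auto simp: S_def mu_def\<close>)
  moreover have "card (S n A v1 \<union> S n A v2 \<union> S n A v3) = card (S n A v1 \<union> S n A v2) + card (S n A v3)"
    by (subst card_Un_disjoint) (use assms f in \<open>auto simp: S_def\<close>)
  ultimately show ?thesis by (simp add: mu_def S_def)
qed

theorem lemma9p6:
  fixes n :: nat and A :: "nat \<Rightarrow> nat \<Rightarrow> color"
  assumes "latin_rectangle 4 n A"
  shows "mu n A b1 = mu n A b2 \<and> mu n A b3 = mu n A b4 \<and> mu n A b5 = mu n A b6"
proof -
  have ct: "\<And>j. j < n \<Longrightarrow> column4 A j \<in> {b1,b2,b3,b4,b5,b6}"
    using assms unfolding latin_rectangle_def by (intro col_type) blast
  have row: "\<And>i. i < 4 \<Longrightarrow> card {j. j < n \<and> A i j = R} = card {j. j < n \<and> A i j = B}"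
    using assms unfolding latin_rectangle_def by blast
  have set: "{j. j < n \<and> A i j = c} = S n A v1 \<union> S n A v2 \<union> S n A v3"
    if "i < 4" "{v1,v2,v3} = {v \<in> {b1,b2,b3,b4,b5,b6}. v ! i = c}" for i c v1 v2 v3
  proof (rule set_eqI)
    fix j
    have U: "j \<in> S n A v1 \<union> S n A v2 \<union> S n A v3 \<longleftrightarrow> j < n \<and> column4 A j \<in> {v1,v2,v3}"
      by (auto simp: S_def)
    have N: "column4 A j ! i = A i j" using nth_col[OF that(1)] .
    show "j \<in> {j. j < n \<and> A i j = c} \<longleftrightarrow> j \<in> S n A v1 \<union> S n A v2 \<union> S n A v3"
    proof
      assume "j \<in> {j. j < n \<and> A i j = c}"
      then have h: "j < n" "A i j = c" by auto
      then have "column4 A j \<in> {v \<in> {b1,b2,b3,b4,b5,b6}. v ! i = c}"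
        using ct[OF h(1)] N by simp
      then show "j \<in> S n A v1 \<union> S n A v2 \<union> S n A v3"
        unfolding U that(2)[symmetric] using h(1) by (rule conjI[rotated])
    next
      assume "j \<in> S n A v1 \<union> S n A v2 \<union> S n A v3"
      then have h: "j < n" "column4 A j \<in> {v \<in> {b1,b2,b3,b4,b5,b6}. v ! i = c}"
        unfolding U that(2) by auto
      then show "j \<in> {j. j < n \<and> A i j = c}" using N by simp
    qed
  qed
  have d: "b1 \<noteq> b2" "b1 \<noteq> b3" "b1 \<noteq> b4" "b1 \<noteq> b5" "b1 \<noteq> b6"
    "b2 \<noteq> b3" "b2 \<noteq> b4" "b2 \<noteq> b5" "b2 \<noteq> b6" "b3 \<noteq> b4" "b3 \<noteq> b5" "b3 \<noteq> b6"
    "b4 \<noteq> b5" "b4 \<noteq> b6" "b5 \<noteq> b6"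
    by (simp_all add: b1_def b2_def b3_def b4_def b5_def b6_def)
  have r0: "mu n A b1 + mu n A b3 + mu n A b5 = mu n A b2 + mu n A b4 + mu n A b6"
  proof -
    have sR: "{b1,b3,b5} = {v \<in> {b1,b2,b3,b4,b5,b6}. v ! 0 = R}"
      by (auto simp: b1_def b2_def b3_def b4_def b5_def b6_def)
    have sB: "{b2,b4,b6} = {v \<in> {b1,b2,b3,b4,b5,b6}. v ! 0 = B}"
      by (auto simp: b1_def b2_def b3_def b4_def b5_def b6_def)
    have "card (S n A b1 \<union> S n A b3 \<union> S n A b5) = card (S n A b2 \<union> S n A b4 \<union> S n A b6)"
      using row[of 0] set[OF _ sR] set[OF _ sB] by simp
    moreover have "card (S n A b1 \<union> S n A b3 \<union> S n A b5) = mu n A b1 + mu n A b3 + mu n A b5"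
      by (rule card3) (use d in auto)
    moreover have "card (S n A b2 \<union> S n A b4 \<union> S n A b6) = mu n A b2 + mu n A b4 + mu n A b6"
      by (rule card3) (use d in auto)
    ultimately show ?thesis by simp
  qed
  have r1: "mu n A b1 + mu n A b4 + mu n A b6 = mu n A b2 + mu n A b3 + mu n A b5"
  proof -
    have sR: "{b1,b4,b6} = {v \<in> {b1,b2,b3,b4,b5,b6}. v ! 1 = R}"
      by (auto simp: b1_def b2_def b3_def b4_def b5_def b6_def)
    have sB: "{b2,b3,b5} = {v \<in> {b1,b2,b3,b4,b5,b6}. v ! 1 = B}"
      by (auto simp: b1_def b2_def b3_def b4_def b5_def b6_def)
    have "card (S n A b1 \<union> S n A b4 \<union> S n A b6) = card (S n A b2 \<union> S n A b3 \<union> S n A b5)"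
      using row[of 1] set[OF _ sR] set[OF _ sB] by simp
    moreover have "card (S n A b1 \<union> S n A b4 \<union> S n A b6) = mu n A b1 + mu n A b4 + mu n A b6"
      by (rule card3) (use d in auto)
    moreover have "card (S n A b2 \<union> S n A b3 \<union> S n A b5) = mu n A b2 + mu n A b3 + mu n A b5"
      by (rule card3) (use d in auto)
    ultimately show ?thesis by simp
  qed
  have r2: "mu n A b2 + mu n A b4 + mu n A b5 = mu n A b1 + mu n A b3 + mu n A b6"
  proof -
    have sR: "{b2,b4,b5} = {v \<in> {b1,b2,b3,b4,b5,b6}. v ! 2 = R}"
      by (auto simp: b1_def b2_def b3_def b4_def b5_def b6_def)
    have sB: "{b1,b3,b6} = {v \<in> {b1,b2,b3,b4,b5,b6}. v ! 2 = B}"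
      by (auto simp: b1_def b2_def b3_def b4_def b5_def b6_def)
    have "card (S n A b2 \<union> S n A b4 \<union> S n A b5) = card (S n A b1 \<union> S n A b3 \<union> S n A b6)"
      using row[of 2] set[OF _ sR] set[OF _ sB] by simp
    moreover have "card (S n A b2 \<union> S n A b4 \<union> S n A b5) = mu n A b2 + mu n A b4 + mu n A b5"
      by (rule card3) (use d in auto)
    moreover have "card (S n A b1 \<union> S n A b3 \<union> S n A b6) = mu n A b1 + mu n A b3 + mu n A b6"
      by (rule card3) (use d in auto)
    ultimately show ?thesis by simp
  qed
  from r0 r1 r2 show ?thesis by linarith
qed

end
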